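(* Let $F:\mathbb{R}^k_+\to\mathbb{R}^k_+$ satisfy $\sup_{x\in\mathbb{R}^k_+}\|F(x)\|<\infty$. Let $M_0\in\{\{0\},\ \partial\mathbb{R}^k_+\}$ be absorbing for the nonlinear Poisson process $\{X^\varepsilon_t\}$ associated with $F$. Assume $F_i(x)>0$ for all $i$ and all $x\in\mathbb{R}^k_+\setminus M_0$. Then, for each $\varepsilon>0$, the process has at least one quasi-stationary distribution supported on $\varepsilon\mathbb{Z}^k_+\setminus M_0$. That is, there is a probability measure $\mu_\varepsilon$ on $\varepsilon\mathbb{Z}^k_+\setminus M_0$ and $\lambda_\varepsilon\in(0,1)$ with $\sum_{x}\mu_\varepsilon(x)p^\varepsilon(x,\Gamma)=\lambda_\varepsilon\mu_\varepsilon(\Gamma)$ for all $\Gamma\subset\varepsilon\mathbb{Z}^k_+\setminus M_0$.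
   Context: Let $\mathbb{R}^k_+=\{x\in\mathbb{R}^k:x_i\ge0\}$ and $\partial\mathbb{R}^k_+=\{x\in\mathbb{R}^k_+:\prod_ix_i=0\}$. For $y\in\mathbb{R}^k_+$, let $Z_1(y),Z_2(y),\dots$ be i.i.d. random vectors with independent components, the $i$-th component being Poisson distributed with mean $y_i$. Given $\varepsilon>0$ and $X^\varepsilon_0\in\varepsilon\mathbb{Z}^k_+$, the nonlinear Poisson process associated with $F$ is the Markov chain on $\varepsilon\mathbb{Z}^k_+$ defined by $X^\varepsilon_{t+1}=\varepsilon Z_{t+1}(F(X^\varepsilon_t)/\varepsilon)$ (independent Poisson draws at each step). Its transition kernel is $p^\varepsilon$. A set $M_0$ is absorbing if $p^\varepsilon(x,M_0)=1$ for $x\in M_0$. *)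

theory Defs
  imports "HOL-Analysis.Analysis" "HOL-Probability.Probability"
begin

definition pois :: "real \<Rightarrow> nat pmf" where
  "pois m = (if m \<le> 0 then return_pmf 0 else poisson_pmf m)"

definition orthant :: "(real^'k) set" where
  "orthant = {x. \<forall>i. 0 \<le> x $ i}"

definition orthant_boundary :: "(real^'k) set" where
  "orthant_boundary = {x \<in> orthant. (\<Prod>i\<in>UNIV. x $ i) = 0}"

definition lattice :: "real \<Rightarrow> (real^'k) set" where
  "lattice eps = {x. \<exists>z::'k \<Rightarrow> nat. x = (\<chi> i. eps * real (z i))}"

definition npp_kernel :: "real \<Rightarrow> (real^'k \<Rightarrow> real^'k) \<Rightarrow> real^'k \<Rightarrow> (real^'k) pmf" where
  "npp_kernel eps F x =
     map_pmf (\<lambda>z. \<chi> i. eps * real (z i)) (Pi_pmf UNIV 0 (\<lambda>i. pois ((F x $ i) / eps)))"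

end

theory Submission imports Defs begin

lemma coord_cont1: "continuous_on S (\<lambda>f::'a\<Rightarrow>real. f x)"
  by (rule continuous_on_subset[OF continuous_on_product_coordinates]) simp

lemma coord_cont2: "continuous_on S (\<lambda>p::('a\<Rightarrow>real)\<times>real. fst p x)"
  by (rule continuous_on_subset[OF continuous_on_compose2[OF continuous_on_product_coordinates continuous_on_fst]]) auto


lemma compact_box_fun:
  fixes X :: "'a \<Rightarrow> real set"
  assumes "\<And>i. compact (X i)"
  shows "compact (PiE UNIV X)"
proof -
  have "compactin (product_topology (\<lambda>_. euclidean) UNIV) (PiE UNIV X)"
    using assms by (simp add: compactin_PiE)
  then show ?thesis by (simp add: euclidean_product_topology)
qed

lemma perron:
  fixes q :: "'a \<Rightarrow> 'a \<Rightarrow> real" and A :: "'a set"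
  assumes finA: "finite A" and neA: "A \<noteq> {}" and qpos: "\<And>x y. x\<in>A \<Longrightarrow> y\<in>A \<Longrightarrow> q x y > 0"
  shows "\<exists>\<mu> s. (\<forall>y\<in>A. \<mu> y > 0) \<and> sum \<mu> A = 1 \<and> s > 0 \<and>
            (\<forall>y\<in>A. (\<Sum>x\<in>A. \<mu> x * q x y) = s * \<mu> y)"
proof -
  define T where "T v y = (\<Sum>x\<in>A. v x * q x y)" for v :: "'a \<Rightarrow> real" and y
  define X where "X y = (if y \<in> A then {0..1::real} else {0})" for y
  define P where "P = PiE UNIV X \<inter> {f. sum f A = 1}"
  define B where "B = (\<Sum>x\<in>A. \<Sum>y\<in>A. q x y)"
  define E where "E = (P \<times> {0..B}) \<inter> (\<Inter>y\<in>A. {p. snd p * T (fst p) y \<le> T (T (fst p)) y})"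
  have contT: "continuous_on UNIV (\<lambda>p::(('a\<Rightarrow>real)\<times>real). T (fst p) y)" for y :: 'a
    unfolding T_def by (intro continuous_intros coord_cont2)
  have contTT: "continuous_on UNIV (\<lambda>p::(('a\<Rightarrow>real)\<times>real). T (T (fst p)) y)" for y :: 'a
    unfolding T_def by (intro continuous_intros coord_cont2)
  have "compact (PiE UNIV X)" by (rule compact_box_fun) (simp add: X_def)
  moreover have "closed {f::'a\<Rightarrow>real. sum f A = 1}"
    by (intro closed_Collect_eq continuous_intros coord_cont1)
  ultimately have "compact P" unfolding P_def by (rule compact_Int_closed)
  then have cE0: "compact (P \<times> {0..B})" by (intro compact_Times) auto
  have "closed (\<Inter>y\<in>A. {p. snd p * T (fst p) y \<le> T (T (fst p)) y})"
    by (intro closed_INT ballI closed_Collect_le continuous_intros contT contTT coord_cont2)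
  with cE0 have cE: "compact E" unfolding E_def by (rule compact_Int_closed)
  have Tlin: "T (\<lambda>x. c * v x) y = c * T v y" for c v y
    unfolding T_def by (simp add: sum_distrib_left mult_ac)
  have Tdiff: "T v y - c * T u y = T (\<lambda>x. v x - c * u x) y" for c v u y
    unfolding T_def by (simp add: sum_subtractf sum_distrib_left algebra_simps)
  have Tloc: "(\<And>x. x \<in> A \<Longrightarrow> v x = w x) \<Longrightarrow> T v y = T w y" for v w y
    unfolding T_def by (rule sum.cong) auto
  have Tnn: "(\<And>x. x \<in> A \<Longrightarrow> 0 \<le> v x) \<Longrightarrow> y \<in> A \<Longrightarrow> 0 \<le> T v y" for v y
    unfolding T_def using qpos by (intro sum_nonneg mult_nonneg_nonneg) (auto intro: less_imp_le)
  have Tpos: "(\<And>x. x \<in> A \<Longrightarrow> 0 \<le> v x) \<Longrightarrow> x0 \<in> A \<Longrightarrow> v x0 > 0 \<Longrightarrow> y \<in> A \<Longrightarrow> 0 < T v y" for v y x0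
    unfolding T_def using qpos finA by (intro sum_pos2[of A x0] mult_nonneg_nonneg mult_pos_pos) (auto intro: less_imp_le)
  have rowB: "(\<Sum>y\<in>A. q x y) \<le> B" if "x \<in> A" for x
  proof -
    have "\<And>x. x\<in>A \<Longrightarrow> 0 \<le> (\<Sum>y\<in>A. q x y)" using qpos by (intro sum_nonneg) (simp add: less_imp_le)
    then show ?thesis unfolding B_def using that finA by (intro member_le_sum[of x A "\<lambda>x. \<Sum>y\<in>A. q x y"]) auto
  qed
  have sumT: "(\<Sum>y\<in>A. T w y) \<le> B * (\<Sum>x\<in>A. w x)" if "\<And>x. x \<in> A \<Longrightarrow> 0 \<le> w x" for w
  proof -
    have "(\<Sum>y\<in>A. T w y) = (\<Sum>y\<in>A. \<Sum>x\<in>A. w x * q x y)" by (simp add: T_def)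
    also have "\<dots> = (\<Sum>x\<in>A. \<Sum>y\<in>A. w x * q x y)" by (rule sum.swap)
    also have "\<dots> = (\<Sum>x\<in>A. w x * (\<Sum>y\<in>A. q x y))" by (simp add: sum_distrib_left)
    also have "\<dots> \<le> (\<Sum>x\<in>A. w x * B)"
      using that rowB by (intro sum_mono mult_left_mono) auto
    finally show ?thesis by (simp add: sum_distrib_left mult_ac)
  qed
  have bound: "r \<le> B" if "\<And>x. x \<in> A \<Longrightarrow> 0 \<le> v x" "x0 \<in> A" "v x0 > 0"
     "\<And>y. y \<in> A \<Longrightarrow> r * T v y \<le> T (T v) y" for r v x0
  proof -
    have pos: "0 < (\<Sum>y\<in>A. T v y)"
      using that Tpos finA by (intro sum_pos2[of A x0]) (auto intro: Tnn less_imp_le)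
    have "r * (\<Sum>y\<in>A. T v y) \<le> (\<Sum>y\<in>A. T (T v) y)"
      using that(4) by (simp add: sum_distrib_left sum_mono)
    also have "\<dots> \<le> B * (\<Sum>y\<in>A. T v y)"
      using that by (intro sumT Tnn) auto
    finally show ?thesis using pos by simp
  qed
  define n where "n = real (card A)"
  have npos: "n > 0" using finA neA by (simp add: n_def card_gt_0_iff)
  define m0 where "m0 y = (if y \<in> A then 1 / n else 0)" for y
  have "m0 \<in> P" unfolding P_def X_def m0_def using npos finA
    by (auto simp: n_def PiE_def extensional_def)
  moreover have "0 \<le> B" unfolding B_def using qpos by (intro sum_nonneg) (auto intro: less_imp_le)
  moreover have "0 \<le> T (T m0) y" if "y \<in> A" for y
    using that npos by (intro Tnn) (auto simp: m0_def)
  ultimately have "(m0, 0) \<in> E" unfolding E_def by auto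
  then have neE: "E \<noteq> {}" by auto
  have "compact (snd ` E)" by (rule compact_continuous_image[OF continuous_on_snd[OF continuous_on_id] cE])
  then obtain t where "t \<in> snd ` E" "\<forall>t'\<in>snd ` E. t' \<le> t"
    using compact_attains_sup[of "snd ` E"] neE by blast
  then obtain p where pE: "p \<in> E" and pmax: "\<And>p'. p' \<in> E \<Longrightarrow> snd p' \<le> snd p" by auto
  define ms where "ms = fst p"
  define s where "s = snd p"
  have msP: "ms \<in> P" and sineq: "\<And>y. y \<in> A \<Longrightarrow> s * T ms y \<le> T (T ms) y"
    using pE unfolding E_def ms_def s_def by auto
  have ms_nn: "\<And>x. 0 \<le> ms x" and ms_sum: "sum ms A = 1"
    using msP unfolding P_def X_def by (auto simp: PiE_def Pi_def split: if_splits)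
  obtain x0 where x0: "x0 \<in> A" "ms x0 > 0"
  proof -
    have "\<exists>x\<in>A. ms x \<noteq> 0" using ms_sum by (metis sum.neutral zero_neq_one)
    then show ?thesis using that ms_nn by (metis less_eq_real_def)
  qed
  define u where "u = T ms"
  have upos: "\<And>y. y \<in> A \<Longrightarrow> u y > 0"
    unfolding u_def using x0 ms_nn by (intro Tpos) auto
  have eig: "T u y = s * u y" if yA: "y \<in> A" for y
  proof (rule ccontr)
    assume ne: "T u y \<noteq> s * u y"
    define d where "d x = T u x - s * u x" for x
    have dnn: "\<And>x. x \<in> A \<Longrightarrow> 0 \<le> d x" unfolding d_def u_def using sineq by auto
    have dpos: "d y > 0" using dnn[OF that] ne unfolding d_def by auto
    have Tdpos: "\<And>z. z \<in> A \<Longrightarrow> T d z > 0" using dnn dpos that by (intro Tpos) auto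
    have Tdeq: "T d z = T (T u) z - s * T u z" for z unfolding d_def by (simp add: Tdiff)
    define \<delta> where "\<delta> = Min ((\<lambda>z. T d z / T u z) ` A)"
    have Tupos: "T u z > 0" if "z \<in> A" for z
      using Tpos[where v=u and ?x0.0=y and y=z] upos that yA by (auto intro: less_imp_le)
    have "\<delta> > 0" unfolding \<delta>_def
    proof -
      have "\<forall>a\<in>(\<lambda>z. T d z / T u z) ` A. 0 < a" using Tdpos Tupos by auto
      then show "0 < Min ((\<lambda>z. T d z / T u z) ` A)" using finA neA by (simp add: Min_gr_iff)
    qed
    have dle: "\<delta> \<le> T d z / T u z" if "z \<in> A" for z
      unfolding \<delta>_def using finA that by auto
    have ineq2: "(s + \<delta>) * T u z \<le> T (T u) z" if "z \<in> A" for z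
    proof -
      have "\<delta> * T u z \<le> T d z" using dle[OF that] Tupos[OF that] by (simp add: field_simps)
      then show ?thesis using Tdeq[of z] by (simp add: algebra_simps)
    qed
    define U where "U = sum u A"
    have Upos: "U > 0" unfolding U_def using finA that upos by (intro sum_pos2[of A y]) (auto intro: less_imp_le)
    define m' where "m' x = (if x \<in> A then u x / U else 0)" for x
    have Tm': "T m' z = T u z / U" for z
    proof -
      have "T m' z = T (\<lambda>x. inverse U * u x) z" by (rule Tloc) (simp add: m'_def field_simps)
      also have "\<dots> = T u z / U" by (simp only: Tlin) (simp add: field_simps)
      finally show ?thesis .
    qed
    have TTm': "T (T m') z = T (T u) z / U" for z
    proof -
      have "T (T m') z = T (\<lambda>x. inverse U * T u x) z" by (rule Tloc) (simp add: Tm' field_simps)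
      also have "\<dots> = T (T u) z / U" by (simp only: Tlin) (simp add: field_simps)
      finally show ?thesis .
    qed
    have ineq3: "(s + \<delta>) * T m' z \<le> T (T m') z" if "z \<in> A" for z
      using ineq2[OF that] Upos by (simp add: Tm' TTm' divide_right_mono)
    have "u x \<le> U" if "x \<in> A" for x
      unfolding U_def using finA that upos by (intro member_le_sum) (auto intro: less_imp_le)
    then have "m' \<in> PiE UNIV X" using Upos upos unfolding X_def m'_def
      by (auto simp: PiE_def extensional_def less_imp_le)
    moreover have "sum m' A = 1" using Upos unfolding m'_def U_def
      by (simp add: sum_divide_distrib[symmetric])
    ultimately have m'P: "m' \<in> P" unfolding P_def by auto
    have "s + \<delta> \<le> B"
      using ineq3 that upos Upos by (intro bound[of m' y]) (auto simp: m'_def less_imp_le)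
    moreover have "0 \<le> s + \<delta>" 
    proof -
      have "0 \<le> s" using pE unfolding E_def s_def by auto
      then show ?thesis using \<open>\<delta> > 0\<close> by simp
    qed
    ultimately have "(m', s + \<delta>) \<in> E" unfolding E_def using m'P ineq3 by auto
    from pmax[OF this] \<open>\<delta> > 0\<close> show False unfolding s_def by simp
  qed
  define U where "U = sum u A"
  have Upos: "U > 0" unfolding U_def using finA x0 upos by (intro sum_pos2[of A x0]) (auto intro: less_imp_le)
  define \<mu> where "\<mu> x = u x / U" for x
  have "s > 0"
  proof -
    have "s * u x0 > 0" using eig[OF x0(1)] upos x0 by (metis Tpos less_imp_le)
    then show ?thesis using upos[OF x0(1)] by (simp add: zero_less_mult_iff)
  qed
  moreover have "\<forall>y\<in>A. \<mu> y > 0" using upos Upos by (simp add: \<mu>_def)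
  moreover have "sum \<mu> A = 1" using Upos by (simp add: \<mu>_def U_def sum_divide_distrib[symmetric])
  moreover have "\<forall>y\<in>A. (\<Sum>x\<in>A. \<mu> x * q x y) = s * \<mu> y"
  proof
    fix y assume y: "y \<in> A"
    have "(\<Sum>x\<in>A. \<mu> x * q x y) = T (\<lambda>x. inverse U * u x) y" unfolding T_def \<mu>_def by (simp add: field_simps)
    also have "\<dots> = inverse U * (s * u y)" by (simp add: Tlin eig[OF y])
    finally show "(\<Sum>x\<in>A. \<mu> x * q x y) = s * \<mu> y" by (simp add: \<mu>_def field_simps)
  qed
  ultimately show ?thesis by blast
qed


lemma pois_pos: "0 < m \<Longrightarrow> 0 < pmf (pois m) j"
  by (simp add: pois_def pmf_poisson)

lemma pois_pos0: "0 < pmf (pois m) 0"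
  by (simp add: pois_def pmf_poisson)

lemma pois_le:
  assumes "m \<le> M" "0 < M"
  shows "pmf (pois m) j \<le> exp M * pmf (poisson_pmf M) j"
proof (cases "m \<le> 0")
  case True
  then show ?thesis using assms
    by (cases j) (auto simp: pois_def pmf_poisson exp_minus field_simps)
next
  case False
  then have m: "0 < m" by simp
  have "pmf (pois m) j = m ^ j / fact j * exp (- m)" using m by (simp add: pois_def pmf_poisson)
  also have "\<dots> \<le> M ^ j / fact j * 1"
    using m assms by (intro mult_mono divide_right_mono power_mono) auto
  also have "\<dots> = exp M * pmf (poisson_pmf M) j"
    using assms by (simp add: pmf_poisson exp_minus field_simps)
  finally show ?thesis .
qed

lemma int_fin:
  fixes f :: "'a \<Rightarrow> real"
  assumes "finite B" "\<And>z. z \<notin> B \<Longrightarrow> f z = 0"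
  shows "integral\<^sup>L (count_space UNIV) f = sum f B"
proof -
  have sub: "{a \<in> UNIV. f a \<noteq> 0} \<subseteq> B" using assms by auto
  then have "finite {a \<in> UNIV. f a \<noteq> 0}" using assms finite_subset by blast
  then have "integral\<^sup>L (count_space UNIV) f = (\<Sum>a | a \<in> UNIV \<and> f a \<noteq> 0. f a)"
    by (rule lebesgue_integral_count_space_finite_support)
  also have "\<dots> = sum f B"
    using sub assms by (intro sum.mono_neutral_left) auto
  finally show ?thesis .
qed

theorem mainTheorem17:
  fixes F :: "real^'k \<Rightarrow> real^'k" and M0 :: "(real^'k) set" and eps :: real
  assumes F_nonneg: "\<And>x. x \<in> orthant \<Longrightarrow> F x \<in> orthant"
    and F_bdd: "bdd_above ((\<lambda>x. norm (F x)) ` orthant)"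
    and M0_cases: "M0 \<in> {{0}, orthant_boundary}"
    and absorbing: "\<And>x. x \<in> lattice eps \<inter> M0 \<Longrightarrow> measure_pmf.prob (npp_kernel eps F x) M0 = 1"
    and F_pos: "\<And>x i. x \<in> orthant - M0 \<Longrightarrow> F x $ i > 0"
    and eps_pos: "eps > 0"
  shows "\<exists>(\<mu> :: (real^'k) pmf) (lam::real).
           set_pmf \<mu> \<subseteq> lattice eps - M0 \<and> 0 < lam \<and> lam < 1 \<and>
           (\<forall>\<Gamma>. \<Gamma> \<subseteq> lattice eps - M0 \<longrightarrow>
              (\<integral>x. measure_pmf.prob (npp_kernel eps F x) \<Gamma> \<partial>measure_pmf \<mu>)
                = lam * measure_pmf.prob \<mu> \<Gamma>)"
proof -
  define emb :: "('k \<Rightarrow> nat) \<Rightarrow> real^'k" where "emb z = (\<chi> i. eps * real (z i))" for z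
  define W where "W x = Pi_pmf (UNIV::'k set) 0 (\<lambda>i. pois (F x $ i / eps))" for x
  define q where "q z w = pmf (W (emb z)) w" for z w
  have kern: "npp_kernel eps F x = map_pmf emb (W x)" for x
    unfolding npp_kernel_def W_def emb_def by simp
  define S where "S = {z. emb z \<notin> M0}"
  have emb_orth: "emb z \<in> orthant" for z
    using eps_pos by (simp add: emb_def orthant_def)
  have emb_inj: "inj emb"
    using eps_pos by (auto simp: inj_def emb_def vec_eq_iff)
  have emb_lat: "emb z \<in> lattice eps" for z
    unfolding lattice_def emb_def by auto
  have lat_emb: "\<exists>z. x = emb z" if "x \<in> lattice eps" for x
    using that unfolding lattice_def emb_def by auto
  define z0 :: "'k \<Rightarrow> nat" where "z0 = (\<lambda>_. 0)"
  define z1 :: "'k \<Rightarrow> nat" where "z1 = (\<lambda>_. 1)"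
  have z0_M0: "emb z0 \<in> M0"
  proof -
    have e0: "emb z0 = 0" by (simp add: emb_def z0_def vec_eq_iff)
    have "(0::real^'k) \<in> orthant_boundary"
      by (simp add: orthant_boundary_def orthant_def)
    then show ?thesis using M0_cases e0 by auto
  qed
  have z1_S: "z1 \<in> S"
  proof -
    have "emb z1 \<noteq> 0" using eps_pos by (simp add: emb_def z1_def vec_eq_iff)
    moreover have "emb z1 \<notin> orthant_boundary"
      using eps_pos by (simp add: orthant_boundary_def emb_def z1_def)
    ultimately show ?thesis using M0_cases unfolding S_def by auto
  qed
  have z0_S: "z0 \<notin> S" using z0_M0 by (simp add: S_def)
  have qprod: "q z w = (\<Prod>i\<in>UNIV. pmf (pois (F (emb z) $ i / eps)) (w i))" for z w
    unfolding q_def W_def by (simp add: pmf_Pi)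
  have qpos: "q z w > 0" if "z \<in> S" for z w
  proof -
    have "F (emb z) $ i > 0" for i using F_pos[of "emb z" i] that emb_orth by (auto simp: S_def)
    then show ?thesis unfolding qprod using eps_pos by (intro prod_pos) (auto intro: pois_pos)
  qed
  have q0pos: "q z z0 > 0" for z
    unfolding qprod z0_def by (intro prod_pos) (auto intro: pois_pos0)
  have q_le1: "q z w \<le> 1" for z w unfolding q_def by (rule pmf_le_1)
  have q_nn: "0 \<le> q z w" for z w unfolding q_def by simp
  have qsum: "sum (q z) B \<le> 1" if "finite B" for z B
    using that unfolding q_def by (simp flip: measure_measure_pmf_finite)
  obtain Cn where Cn: "\<And>x. x \<in> orthant \<Longrightarrow> norm (F x) \<le> Cn"
    using F_bdd by (auto simp: bdd_above_def)
  define M where "M = Cn / eps + 1"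
  have Cn0: "0 \<le> Cn" using Cn[OF emb_orth[of z0]] norm_ge_zero order_trans by blast
  have Mpos: "0 < M" using Cn0 eps_pos unfolding M_def by (metis add_nonneg_pos divide_nonneg_pos zero_less_one)
  define PM where "PM = Pi_pmf (UNIV::'k set) 0 (\<lambda>_. poisson_pmf M)"
  define K where "K = exp M ^ CARD('k)"
  have qbound: "q z w \<le> K * pmf PM w" for z w
  proof -
    have mle: "F (emb z) $ i / eps \<le> M" for i
    proof -
      have "F (emb z) $ i \<le> Cn" using Cn[OF emb_orth[of z]] component_le_norm_cart[of "F (emb z)" i] by linarith
      then show ?thesis using eps_pos by (simp add: M_def divide_right_mono less_imp_le add_increasing2 order_trans[OF divide_right_mono])
    qed
    have "q z w \<le> (\<Prod>i\<in>UNIV. exp M * pmf (poisson_pmf M) (w i))"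
      unfolding qprod by (intro prod_mono conjI pois_le mle Mpos) auto
    also have "\<dots> = K * pmf PM w"
      by (simp add: K_def PM_def pmf_Pi prod.distrib)
    finally show ?thesis .
  qed

  define A where "A n = {z \<in> S. \<forall>i. z i \<le> Suc n}" for n
  have finA: "finite (A n)" for n
  proof -
    have "A n \<subseteq> PiE UNIV (\<lambda>_. {..Suc n})" by (auto simp: A_def PiE_def)
    moreover have "finite (PiE (UNIV::'k set) (\<lambda>_. {..Suc n}))" by (intro finite_PiE) auto
    ultimately show ?thesis by (rule finite_subset)
  qed
  have z1A: "z1 \<in> A n" for n using z1_S by (simp add: A_def z1_def)
  have AS: "A n \<subseteq> S" for n by (auto simp: A_def)
  have "\<forall>n. \<exists>p. (\<forall>y\<in>A n. fst p y > 0) \<and> sum (fst p) (A n) = 1 \<and> snd p > 0 \<and>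
            (\<forall>y\<in>A n. (\<Sum>x\<in>A n. fst p x * q x y) = snd p * fst p y)"
  proof
    fix n
    from perron[OF finA[of n], of q] z1A[of n] qpos AS
    obtain \<mu> s where "(\<forall>y\<in>A n. \<mu> y > 0) \<and> sum \<mu> (A n) = 1 \<and> s > 0 \<and>
            (\<forall>y\<in>A n. (\<Sum>x\<in>A n. \<mu> x * q x y) = s * \<mu> y)" by blast
    then show "\<exists>p. (\<forall>y\<in>A n. fst p y > 0) \<and> sum (fst p) (A n) = 1 \<and> snd p > 0 \<and>
            (\<forall>y\<in>A n. (\<Sum>x\<in>A n. fst p x * q x y) = snd p * fst p y)"
      by (intro exI[of _ "(\<mu>, s)"]) simp
  qed
  then have "\<exists>pp. \<forall>n. (\<forall>y\<in>A n. fst (pp n) y > 0) \<and> sum (fst (pp n)) (A n) = 1 \<and> snd (pp n) > 0 \<and>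
            (\<forall>y\<in>A n. (\<Sum>x\<in>A n. fst (pp n) x * q x y) = snd (pp n) * fst (pp n) y)" by (rule choice)
  then obtain pp where ppall: "\<forall>n. (\<forall>y\<in>A n. fst (pp n) y > 0) \<and> sum (fst (pp n)) (A n) = 1 \<and> snd (pp n) > 0 \<and>
            (\<forall>y\<in>A n. (\<Sum>x\<in>A n. fst (pp n) x * q x y) = snd (pp n) * fst (pp n) y)" by (elim exE)
  have pp: "(\<forall>y\<in>A n. fst (pp n) y > 0) \<and> sum (fst (pp n)) (A n) = 1 \<and> snd (pp n) > 0 \<and>
            (\<forall>y\<in>A n. (\<Sum>x\<in>A n. fst (pp n) x * q x y) = snd (pp n) * fst (pp n) y)" for n using spec[OF ppall, of n] .
  define m where "m n z = (if z \<in> A n then fst (pp n) z else 0)" for n z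
  define lam where "lam n = snd (pp n)" for n
  have m_pos: "z \<in> A n \<Longrightarrow> m n z > 0" for n z using pp by (simp add: m_def)
  have m_nn: "0 \<le> m n z" for n z using pp[of n] by (auto simp: m_def less_imp_le)
  have m_out: "z \<notin> A n \<Longrightarrow> m n z = 0" for n z by (simp add: m_def)
  have m_sum: "sum (m n) (A n) = 1" for n using pp[of n] by (simp add: m_def)
  have m_eig: "(\<Sum>x\<in>A n. m n x * q x y) = lam n * m n y" if "y \<in> A n" for n y
    using pp[of n] that by (simp add: m_def lam_def)
  have m_le1: "m n z \<le> 1" for n z
  proof (cases "z \<in> A n")
    case True
    then have "m n z \<le> sum (m n) (A n)" using finA m_nn by (intro member_le_sum) auto
    then show ?thesis using m_sum by simp
  qed (simp add: m_out)
  define c where "c = q z1 z1"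
  have cpos: "c > 0" unfolding c_def using qpos z1_S by simp
  have lam_ge: "c \<le> lam n" for n
  proof -
    have "m n z1 * q z1 z1 \<le> (\<Sum>x\<in>A n. m n x * q x z1)"
      using finA z1A m_nn q_nn by (intro member_le_sum[of z1 "A n" "\<lambda>x. m n x * q x z1"]) auto
    also have "\<dots> = lam n * m n z1" using m_eig z1A by simp
    finally show ?thesis using m_pos[OF z1A] unfolding c_def by (simp add: mult.commute)
  qed
  have lam_le: "lam n \<le> 1" for n
  proof -
    have "lam n = (\<Sum>y\<in>A n. lam n * m n y)" using m_sum by (simp add: sum_distrib_left[symmetric])
    also have "\<dots> = (\<Sum>y\<in>A n. \<Sum>x\<in>A n. m n x * q x y)" using m_eig by simp
    also have "\<dots> = (\<Sum>x\<in>A n. \<Sum>y\<in>A n. m n x * q x y)" by (rule sum.swap)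
    also have "\<dots> = (\<Sum>x\<in>A n. m n x * sum (q x) (A n))" by (simp add: sum_distrib_left)
    also have "\<dots> \<le> (\<Sum>x\<in>A n. m n x * 1)"
      using qsum finA m_nn by (intro sum_mono mult_left_mono) auto
    finally show ?thesis using m_sum by simp
  qed
  define D where "D w = K / c * pmf PM w" for w
  have m_dom: "m n w \<le> D w" for n w
  proof (cases "w \<in> A n")
    case True
    have "lam n * m n w = (\<Sum>x\<in>A n. m n x * q x w)" using m_eig[OF True] by simp
    also have "\<dots> \<le> (\<Sum>x\<in>A n. m n x * (K * pmf PM w))"
      using m_nn qbound by (intro sum_mono mult_left_mono) auto
    also have "\<dots> = K * pmf PM w" using m_sum by (simp add: sum_distrib_right[symmetric])
    finally have "lam n * m n w \<le> K * pmf PM w" .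
    moreover have "c * m n w \<le> lam n * m n w" using lam_ge m_nn by (intro mult_right_mono) auto
    ultimately have "c * m n w \<le> K * pmf PM w" by linarith
    then show ?thesis using cpos by (simp add: D_def field_simps)
  next
    case False
    have "0 \<le> D w" using cpos Mpos by (simp add: D_def K_def)
    then show ?thesis using False by (simp add: m_out)
  qed
  have intD: "integrable (count_space UNIV) D" unfolding D_def by (intro integrable_mult_right integrable_pmf)
  have D_nn: "0 \<le> D w" for w using cpos Mpos by (simp add: D_def K_def)
  have m_int: "integral\<^sup>L (count_space UNIV) (m n) = 1" for n
    using int_fin[OF finA[of n], of "m n"] m_out m_sum by simp

  define KK where "KK = PiE (UNIV::('k\<Rightarrow>nat) set) (\<lambda>_. {0..1::real}) \<times> {0..1::real}"
  have "compact KK" unfolding KK_def by (intro compact_Times compact_box_fun) auto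
  then have "seq_compact KK" by (rule compact_imp_seq_compact)
  moreover have inKK: "\<forall>n. (\<lambda>n. (m n, lam n)) n \<in> KK"
  proof
    fix n
    have "c \<le> lam n" by (rule lam_ge)
    then have "0 \<le> lam n" using cpos by linarith
    then show "(\<lambda>n. (m n, lam n)) n \<in> KK"
      using m_nn m_le1 lam_le by (simp add: KK_def PiE_def extensional_def)
  qed
  ultimately obtain l r where lK: "l \<in> KK" and r: "strict_mono r"
      and lim: "((\<lambda>n. (m n, lam n)) \<circ> r) \<longlonglongrightarrow> l"
    by (rule seq_compactE)
  define mi where "mi = fst l"
  define li where "li = snd l"
  have lim_lam: "(\<lambda>j. lam (r j)) \<longlonglongrightarrow> li"
    using tendsto_snd[OF lim] by (simp add: li_def o_def)
  have lim_m0: "(\<lambda>j. m (r j)) \<longlonglongrightarrow> mi"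
    using tendsto_fst[OF lim] by (simp add: mi_def o_def)
  have lim_m: "(\<lambda>j. m (r j) w) \<longlonglongrightarrow> mi w" for w
  proof -
    have "isCont (\<lambda>f::('k\<Rightarrow>nat)\<Rightarrow>real. f w) mi"
      using continuous_on_product_coordinates[of w] continuous_on_eq_continuous_at[OF open_UNIV] by blast
    then show ?thesis using isCont_tendsto_compose[OF _ lim_m0] by blast
  qed
  have li_ge: "c \<le> li" using lim_lam lam_ge by (intro tendsto_lowerbound[OF lim_lam]) (auto intro: always_eventually)
  have mi_nn: "0 \<le> mi w" for w using lim_m[of w] m_nn by (intro tendsto_lowerbound[OF lim_m[of w]]) (auto intro: always_eventually)
  have mi_dom: "mi w \<le> D w" for w using m_dom by (intro tendsto_upperbound[OF lim_m[of w]]) (auto intro: always_eventually)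
  have mi_out: "mi w = 0" if "w \<notin> S" for w
  proof -
    have "(\<lambda>j. m (r j) w) = (\<lambda>j. 0)" using that AS m_out by (auto intro!: ext)
    then show ?thesis using lim_m[of w] LIMSEQ_unique[OF _ tendsto_const] by metis
  qed

  have meas: "f \<in> borel_measurable (count_space UNIV)" for f :: "('k\<Rightarrow>nat) \<Rightarrow> real" by simp
  have "(\<lambda>j. integral\<^sup>L (count_space UNIV) (m (r j))) \<longlonglongrightarrow> integral\<^sup>L (count_space UNIV) mi"
    by (rule integral_dominated_convergence[where w=D]) (auto simp: meas intD lim_m m_dom m_nn)
  then have mi_int: "integral\<^sup>L (count_space UNIV) mi = 1"
    using m_int LIMSEQ_unique[OF _ tendsto_const] by simp
  have integ_mi: "integrable (count_space UNIV) mi"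
    using mi_nn mi_dom D_nn by (intro Bochner_Integration.integrable_bound[OF intD meas]) auto
  have integ_miq: "integrable (count_space UNIV) (\<lambda>z. mi z * q z w)" for w
    using mi_nn q_nn q_le1 by (intro Bochner_Integration.integrable_bound[OF integ_mi meas])
      (auto simp: abs_mult intro!: mult_left_le)
  have mi_eig: "integral\<^sup>L (count_space UNIV) (\<lambda>z. mi z * q z w) = li * mi w" if wS: "w \<in> S" for w
  proof -
    have L1: "(\<lambda>j. integral\<^sup>L (count_space UNIV) (\<lambda>z. m (r j) z * q z w)) \<longlonglongrightarrow>
               integral\<^sup>L (count_space UNIV) (\<lambda>z. mi z * q z w)"
    proof (rule integral_dominated_convergence[where w=D])
      show "\<And>j. AE z in count_space UNIV. norm (m (r j) z * q z w) \<le> D z"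
      proof (intro AE_I2)
        fix j z
        have "m (r j) z * q z w \<le> m (r j) z * 1" using m_nn q_le1 by (intro mult_left_mono) auto
        then show "norm (m (r j) z * q z w) \<le> D z" using m_dom[of "r j" z] m_nn q_nn by (simp add: abs_mult)
      qed
    qed (auto simp: meas intD intro!: tendsto_mult_right lim_m)
    define N where "N = Max (range w)"
    have ev: "eventually (\<lambda>j. integral\<^sup>L (count_space UNIV) (\<lambda>z. m (r j) z * q z w) = lam (r j) * m (r j) w) sequentially"
    proof (rule eventually_sequentiallyI[of N])
      fix j assume "N \<le> j"
      then have "N \<le> r j" using seq_suble[OF r, of j] by linarith
      moreover have "w i \<le> N" for i unfolding N_def by (rule Max_ge) auto
      ultimately have wA: "w \<in> A (r j)" using wS by (auto simp: A_def intro: le_SucI order_trans)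
      have "integral\<^sup>L (count_space UNIV) (\<lambda>z. m (r j) z * q z w) = (\<Sum>z\<in>A (r j). m (r j) z * q z w)"
        by (rule int_fin[OF finA]) (simp add: m_out)
      also have "\<dots> = lam (r j) * m (r j) w" by (rule m_eig[OF wA])
      finally show "integral\<^sup>L (count_space UNIV) (\<lambda>z. m (r j) z * q z w) = lam (r j) * m (r j) w" .
    qed
    have L2: "(\<lambda>j. lam (r j) * m (r j) w) \<longlonglongrightarrow> li * mi w" by (intro tendsto_mult lim_lam lim_m)
    have "(\<lambda>j. integral\<^sup>L (count_space UNIV) (\<lambda>z. m (r j) z * q z w)) \<longlonglongrightarrow> li * mi w"
      using tendsto_cong[OF ev] L2 by simp
    then show ?thesis using L1 LIMSEQ_unique by blast
  qed
  have nn1: "(\<integral>\<^sup>+ x. ennreal (mi x) \<partial>count_space UNIV) = 1"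
    using nn_integral_eq_integral[OF integ_mi] mi_nn mi_int by simp
  define \<nu> where "\<nu> = embed_pmf mi"
  have pmf_nu: "pmf \<nu> z = mi z" for z unfolding \<nu>_def using mi_nn nn1 by (intro pmf_embed_pmf) auto
  have set_nu: "set_pmf \<nu> \<subseteq> S" unfolding \<nu>_def using mi_nn nn1 mi_out by (subst set_embed_pmf) auto

  define \<mu> where "\<mu> = map_pmf emb \<nu>"
  have li_pos: "0 < li" using li_ge cpos by linarith
  have swap: "(\<integral>\<^sup>+z. \<integral>\<^sup>+w. h z w \<partial>count_space UNIV \<partial>count_space UNIV) =
              (\<integral>\<^sup>+w. \<integral>\<^sup>+z. h z w \<partial>count_space UNIV \<partial>count_space UNIV)"
    for h :: "('k\<Rightarrow>nat) \<Rightarrow> ('k\<Rightarrow>nat) \<Rightarrow> ennreal"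
    using nn_integral_fst_count_space[of "case_prod h"] nn_integral_snd_count_space[of "case_prod h"] by simp
  have emeas: "emeasure (measure_pmf p) X = (\<integral>\<^sup>+w. ennreal (pmf p w) * indicator X w \<partial>count_space UNIV)" for p :: "('k\<Rightarrow>nat) pmf" and X
    by (simp flip: nn_integral_measure_pmf nn_integral_indicator)
  have key: "(\<integral>x. measure_pmf.prob (npp_kernel eps F x) \<Gamma> \<partial>measure_pmf \<mu>) = li * measure_pmf.prob \<mu> \<Gamma>"
    if \<Gamma>: "\<Gamma> \<subseteq> lattice eps - M0" for \<Gamma>
  proof -
    define G where "G = emb -` \<Gamma>"
    have GS: "G \<subseteq> S" using \<Gamma> by (auto simp: G_def S_def)
    define f where "f z = measure_pmf.prob (W (emb z)) G" for z
    have lhs: "(\<integral>x. measure_pmf.prob (npp_kernel eps F x) \<Gamma> \<partial>measure_pmf \<mu>) = (\<integral>z. f z \<partial>measure_pmf \<nu>)"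
      by (simp add: \<mu>_def integral_map_pmf kern measure_map_pmf f_def G_def)
    have inner: "(\<integral>\<^sup>+z. ennreal (mi z) * (ennreal (q z w) * indicator G w) \<partial>count_space UNIV)
         = ennreal li * (ennreal (mi w) * indicator G w)" for w
    proof (cases "w \<in> G")
      case True
      then have wS: "w \<in> S" using GS by auto
      have "(\<integral>\<^sup>+z. ennreal (mi z) * (ennreal (q z w) * indicator G w) \<partial>count_space UNIV)
          = (\<integral>\<^sup>+z. ennreal (mi z * q z w) \<partial>count_space UNIV)"
        using True mi_nn q_nn by (simp add: ennreal_mult)
      also have "\<dots> = ennreal (integral\<^sup>L (count_space UNIV) (\<lambda>z. mi z * q z w))"
        using mi_nn q_nn by (intro nn_integral_eq_integral integ_miq) auto
      also have "\<dots> = ennreal (li * mi w)" using mi_eig[OF wS] by simp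
      finally show ?thesis using True li_pos mi_nn by (simp add: ennreal_mult)
    qed simp
    have "(\<integral>\<^sup>+z. ennreal (f z) \<partial>measure_pmf \<nu>)
        = (\<integral>\<^sup>+z. ennreal (mi z) * ennreal (f z) \<partial>count_space UNIV)"
      by (simp add: nn_integral_measure_pmf pmf_nu)
    also have "\<dots> = (\<integral>\<^sup>+z. ennreal (mi z) * (\<integral>\<^sup>+w. ennreal (q z w) * indicator G w \<partial>count_space UNIV) \<partial>count_space UNIV)"
      by (simp add: f_def measure_pmf.emeasure_eq_measure[symmetric] emeas q_def)
    also have "\<dots> = (\<integral>\<^sup>+z. \<integral>\<^sup>+w. ennreal (mi z) * (ennreal (q z w) * indicator G w) \<partial>count_space UNIV \<partial>count_space UNIV)"
      by (simp add: nn_integral_cmult)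
    also have "\<dots> = (\<integral>\<^sup>+w. \<integral>\<^sup>+z. ennreal (mi z) * (ennreal (q z w) * indicator G w) \<partial>count_space UNIV \<partial>count_space UNIV)"
      by (rule swap)
    also have "\<dots> = (\<integral>\<^sup>+w. ennreal li * (ennreal (mi w) * indicator G w) \<partial>count_space UNIV)"
      by (simp add: inner)
    also have "\<dots> = ennreal li * emeasure (measure_pmf \<nu>) G"
      by (simp add: nn_integral_cmult emeas pmf_nu)
    also have "\<dots> = ennreal (li * measure_pmf.prob \<nu> G)"
      using li_pos by (simp add: measure_pmf.emeasure_eq_measure ennreal_mult)
    finally have nn: "(\<integral>\<^sup>+z. ennreal (f z) \<partial>measure_pmf \<nu>) = ennreal (li * measure_pmf.prob \<nu> G)" .
    have "(\<integral>z. f z \<partial>measure_pmf \<nu>) = enn2real (\<integral>\<^sup>+z. ennreal (f z) \<partial>measure_pmf \<nu>)"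
      by (rule integral_eq_nn_integral) (auto simp: f_def)
    also have "\<dots> = li * measure_pmf.prob \<nu> G" using nn li_pos by simp
    finally show ?thesis using lhs by (simp add: \<mu>_def measure_map_pmf G_def)
  qed

  have set_mu: "set_pmf \<mu> \<subseteq> lattice eps - M0"
    using set_nu emb_lat by (auto simp: \<mu>_def S_def)
  define \<Gamma>0 where "\<Gamma>0 = lattice eps - M0"
  have prob1: "measure_pmf.prob \<mu> \<Gamma>0 = 1"
  proof -
    have "measure_pmf.prob \<mu> (UNIV - \<Gamma>0) = 0"
      using set_mu by (simp add: measure_pmf_zero_iff \<Gamma>0_def) blast
    moreover have "measure_pmf.prob \<mu> (UNIV - \<Gamma>0) = 1 - measure_pmf.prob \<mu> \<Gamma>0"
      using measure_pmf.prob_compl[of \<Gamma>0 \<mu>] by simp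
    ultimately show ?thesis by simp
  qed
  have lt1: "measure_pmf.prob (npp_kernel eps F x) \<Gamma>0 < 1" if "x \<in> set_pmf \<mu>" for x
  proof -
    have "x \<in> emb ` set_pmf \<nu>" using that by (simp add: \<mu>_def)
    then obtain z where x: "x = emb z" by blast
    have disj: "\<Gamma>0 \<inter> {emb z0} = {}" using z0_M0 by (auto simp: \<Gamma>0_def)
    have "measure_pmf.prob (npp_kernel eps F x) \<Gamma>0 + measure_pmf.prob (npp_kernel eps F x) {emb z0}
          = measure_pmf.prob (npp_kernel eps F x) (\<Gamma>0 \<union> {emb z0})"
      using measure_pmf.finite_measure_Union[of \<Gamma>0 "npp_kernel eps F x" "{emb z0}", OF _ _ disj] by simp
    also have "\<dots> \<le> 1" by simp
    finally have le: "measure_pmf.prob (npp_kernel eps F x) \<Gamma>0 + pmf (npp_kernel eps F x) (emb z0) \<le> 1"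
      by (simp add: measure_pmf_single)
    have "pmf (npp_kernel eps F x) (emb z0) = q z z0"
      by (simp add: kern x q_def pmf_map_inj'[OF emb_inj])
    then show ?thesis using le q0pos[of z] by linarith
  qed
  have "(\<integral>x. measure_pmf.prob (npp_kernel eps F x) \<Gamma>0 \<partial>measure_pmf \<mu>) < (\<integral>x. 1 \<partial>measure_pmf \<mu>)"
  proof (rule measure_pmf.integral_less_AE_space)
    show "integrable (measure_pmf \<mu>) (\<lambda>x. measure_pmf.prob (npp_kernel eps F x) \<Gamma>0)"
      by (rule measure_pmf.integrable_const_bound[where B=1]) auto
    show "AE x in measure_pmf \<mu>. measure_pmf.prob (npp_kernel eps F x) \<Gamma>0 < 1"
      using lt1 by (intro AE_pmfI) auto
  qed (auto simp: measure_pmf.emeasure_space_1)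
  then have "li < 1" using key[of \<Gamma>0] prob1 by (simp add: \<Gamma>0_def)
  then show ?thesis using set_mu li_pos key by blast
qed

end
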